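(* Let $T$ be a complete first-order theory with monster model $\mathcal{U}$, let $A\subseteq\mathcal{U}$ be small, and let $p\in S_x(\mathcal{U})$, $q\in S_y(\mathcal{U})$ be global types. If $p\geq_{D,A} q$, then $\delta_p\geq_{\mathbb{E},A}\delta_q$.
   Context: "Small" means of cardinality less than the saturation of $\mathcal{U}$; $x,y$ are disjoint finite tuples of variables. For $B\subseteq\mathcal{U}$, $\mathcal{L}_x(B)$ is the Boolean algebra of formulas in free variables $x$ with parameters from $B$ modulo $T$-equivalence (identified with $B$-definable subsets of $\mathcal{U}^x$), and $\mathcal{L}_x(B)$ is identified with a subalgebra of $\mathcal{L}_{xy}(B)$ via $\varphi(x)\mapsto\varphi(x)\wedge y=y$. A Keisler measure over $B$ in $x$ is a finitely additive probability measure on $\mathcal{L}_x(B)$; $\mathfrak{M}_x(B)$ is the set of these. For $\omega\in\mathfrak{M}_{xy}(B)$, $\pi_x(\omega)\in\mathfrak{M}_x(B)$ is $\pi_x(\omega)(\varphi(x))=\omega(\varphi(x)\wedge y=y)$ (similarly $\pi_y$), and $\omega|_{C}$ denotes restriction to $\mathcal{L}_{xy}(C)$ for $C\subseteq B$. For $p\in S_x(B)$, $\delta_p$ is the Dirac measure: $\delta_p(\varphi)=1$ if $\varphi\in p$ and $0$ otherwise. Domination of types: $p\geq_{D,A}q$ means there is $r\in S_{xy}(A)$ with $p|_A\subseteq r$ and $p\cup r\vdash q$. Extension space: for $\mu\in\mathfrak{M}_x(\mathcal{U})$ and $\lambda\in\mathfrak{M}_{xy}(A)$ with $\mu|_A=\pi_x(\lambda)$,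 $\operatorname{E}(\lambda,\mu)=\{\omega\in\mathfrak{M}_{xy}(\mathcal{U}):\omega|_A=\lambda,\ \pi_x(\omega)=\mu\}$. Extension domination: for $\mu\in\mathfrak{M}_x(\mathcal{U})$, $\nu\in\mathfrak{M}_y(\mathcal{U})$, $\mu\geq_{\mathbb{E},A}\nu$ means there is $\lambda\in\mathfrak{M}_{xy}(A)$ with $\pi_x(\lambda)=\mu|_A$ such that $\pi_y(\omega)=\nu$ for every $\omega\in\operatorname{E}(\lambda,\mu)$. *)

theory Defs
  imports Complex_Main "HOL-Library.FuncSet"
begin

text \<open>Terms and formulas over function symbols 'f, relation symbols 'r, variables nat,
  with parameters (constants naming elements) of type 'u.\<close>

datatype ('f, 'u) trm = Var nat | Par 'u | Fn 'f "('f, 'u) trm list"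

datatype ('f, 'r, 'u) fm =
    Eq "('f, 'u) trm" "('f, 'u) trm"
  | Rel 'r "('f, 'u) trm list"
  | Neg "('f, 'r, 'u) fm"
  | Conj "('f, 'r, 'u) fm" "('f, 'r, 'u) fm"
  | Ex nat "('f, 'r, 'u) fm"

fun fvt :: "('f, 'u) trm \<Rightarrow> nat set" where
  "fvt (Var n) = {n}"
| "fvt (Par u) = {}"
| "fvt (Fn f ts) = (\<Union>t\<in>set ts. fvt t)"

fun fv :: "('f, 'r, 'u) fm \<Rightarrow> nat set" where
  "fv (Eq s t) = fvt s \<union> fvt t"
| "fv (Rel R ts) = (\<Union>t\<in>set ts. fvt t)"
| "fv (Neg \<phi>) = fv \<phi>"
| "fv (Conj \<phi> \<psi>) = fv \<phi> \<union> fv \<psi>"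
| "fv (Ex n \<phi>) = fv \<phi> - {n}"

abbreviation params :: "('f, 'r, 'u) fm \<Rightarrow> 'u set" where
  "params \<phi> \<equiv> set3_fm \<phi>"

record ('f, 'r, 'u) struc =
  univ :: "'u set"
  fint :: "'f \<Rightarrow> 'u list \<Rightarrow> 'u"
  rint :: "'r \<Rightarrow> 'u list \<Rightarrow> bool"

definition is_struc :: "('f, 'r, 'u, 'z) struc_scheme \<Rightarrow> bool" where
  "is_struc M \<longleftrightarrow> univ M \<noteq> {} \<and> (\<forall>f us. set us \<subseteq> univ M \<longrightarrow> fint M f us \<in> univ M)"

fun evalt :: "('f, 'r, 'u, 'z) struc_scheme \<Rightarrow> (nat \<Rightarrow> 'u) \<Rightarrow> ('f, 'u) trm \<Rightarrow> 'u" where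
  "evalt M e (Var n) = e n"
| "evalt M e (Par u) = u"
| "evalt M e (Fn f ts) = fint M f (map (evalt M e) ts)"

fun sat :: "('f, 'r, 'u, 'z) struc_scheme \<Rightarrow> (nat \<Rightarrow> 'u) \<Rightarrow> ('f, 'r, 'u) fm \<Rightarrow> bool" where
  "sat M e (Eq s t) = (evalt M e s = evalt M e t)"
| "sat M e (Rel R ts) = rint M R (map (evalt M e) ts)"
| "sat M e (Neg \<phi>) = (\<not> sat M e \<phi>)"
| "sat M e (Conj \<phi> \<psi>) = (sat M e \<phi> \<and> sat M e \<psi>)"
| "sat M e (Ex n \<phi>) = (\<exists>b\<in>univ M. sat M (e(n := b)) \<phi>)"

text \<open>A tuple of variables is a finite set X of variable names; U^X is the set of extensional maps X to univ M.\<close>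

definition dset :: "('f, 'r, 'u, 'z) struc_scheme \<Rightarrow> nat set \<Rightarrow> ('f, 'r, 'u) fm \<Rightarrow> (nat \<Rightarrow> 'u) set" where
  "dset M X \<phi> = {a \<in> X \<rightarrow>\<^sub>E univ M. sat M a \<phi>}"

text \<open>L_X(B): B-definable subsets of U^X (formulas in free variables X with parameters in B,
  modulo equivalence in the monster model).\<close>
definition LL :: "('f, 'r, 'u, 'z) struc_scheme \<Rightarrow> nat set \<Rightarrow> 'u set \<Rightarrow> (nat \<Rightarrow> 'u) set set" where
  "LL M X B = {dset M X \<phi> | \<phi>. fv \<phi> \<subseteq> X \<and> params \<phi> \<subseteq> B}"

text \<open>Identification of L_X(B) inside L_Z(B) for X \<subseteq> Z: \<phi>(x) maps to \<phi>(x) \<and> y = y.\<close>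
definition liftto :: "('f, 'r, 'u, 'z) struc_scheme \<Rightarrow> nat set \<Rightarrow> nat set \<Rightarrow> (nat \<Rightarrow> 'u) set \<Rightarrow> (nat \<Rightarrow> 'u) set" where
  "liftto M Z X D = {a \<in> Z \<rightarrow>\<^sub>E univ M. restrict a X \<in> D}"

text \<open>Complete types over B in variables X: ultrafilters of L_X(B) (maximal consistent sets
  of formulas modulo equivalence; consistency = finite satisfiability in the monster).\<close>
definition complete_type :: "('f, 'r, 'u, 'z) struc_scheme \<Rightarrow> nat set \<Rightarrow> 'u set \<Rightarrow> (nat \<Rightarrow> 'u) set set \<Rightarrow> bool" where
  "complete_type M X B p \<longleftrightarrow>
     p \<subseteq> LL M X B \<and> {} \<notin> p \<and> (X \<rightarrow>\<^sub>E univ M) \<in> p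
     \<and> (\<forall>D\<in>p. \<forall>E\<in>p. D \<inter> E \<in> p)
     \<and> (\<forall>D\<in>p. \<forall>E\<in>LL M X B. D \<subseteq> E \<longrightarrow> E \<in> p)
     \<and> (\<forall>D\<in>LL M X B. D \<in> p \<or> (X \<rightarrow>\<^sub>E univ M) - D \<in> p)"

definition realized :: "('f, 'r, 'u, 'z) struc_scheme \<Rightarrow> nat set \<Rightarrow> (nat \<Rightarrow> 'u) set set \<Rightarrow> bool" where
  "realized M X p \<longleftrightarrow> (\<exists>a \<in> X \<rightarrow>\<^sub>E univ M. \<forall>D\<in>p. a \<in> D)"

text \<open>"B is small w.r.t. K": |B| < |K|, i.e. there is no injection of K into B.\<close>
definition small :: "'k set \<Rightarrow> 'u set \<Rightarrow> bool" where
  "small K B \<longleftrightarrow> \<not> (\<exists>f. inj_on f K \<and> f ` K \<subseteq> B)"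

definition saturated :: "('f, 'r, 'u, 'z) struc_scheme \<Rightarrow> 'k set \<Rightarrow> bool" where
  "saturated M K \<longleftrightarrow> (\<forall>B X p. B \<subseteq> univ M \<and> small K B \<and> finite X \<and> complete_type M X B p
       \<longrightarrow> realized M X p)"

definition automorphism :: "('f, 'r, 'u, 'z) struc_scheme \<Rightarrow> ('u \<Rightarrow> 'u) \<Rightarrow> bool" where
  "automorphism M \<sigma> \<longleftrightarrow> bij_betw \<sigma> (univ M) (univ M)
     \<and> (\<forall>f us. set us \<subseteq> univ M \<longrightarrow> \<sigma> (fint M f us) = fint M f (map \<sigma> us))
     \<and> (\<forall>R us. set us \<subseteq> univ M \<longrightarrow> (rint M R (map \<sigma> us) \<longleftrightarrow> rint M R us))"

definition elementary_on :: "('f, 'r, 'u, 'z) struc_scheme \<Rightarrow> 'u set \<Rightarrow> ('u \<Rightarrow> 'u) \<Rightarrow> bool" where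
  "elementary_on M B g \<longleftrightarrow> g ` B \<subseteq> univ M \<and>
     (\<forall>\<phi> e. fv \<phi> = {} \<and> params \<phi> \<subseteq> B \<longrightarrow> (sat M e \<phi> \<longleftrightarrow> sat M e (map_fm id id g \<phi>)))"

definition strongly_homogeneous :: "('f, 'r, 'u, 'z) struc_scheme \<Rightarrow> 'k set \<Rightarrow> bool" where
  "strongly_homogeneous M K \<longleftrightarrow> (\<forall>B g. B \<subseteq> univ M \<and> small K B \<and> elementary_on M B g
      \<longrightarrow> (\<exists>\<sigma>. automorphism M \<sigma> \<and> (\<forall>b\<in>B. \<sigma> b = g b)))"

text \<open>Monster model of the complete theory T = Th(M), with saturation index K.\<close>
definition monster :: "('f, 'r, 'u, 'z) struc_scheme \<Rightarrow> 'k set \<Rightarrow> bool" where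
  "monster M K \<longleftrightarrow> is_struc M \<and> infinite K \<and> saturated M K \<and> strongly_homogeneous M K"

definition keisler :: "('f, 'r, 'u, 'z) struc_scheme \<Rightarrow> nat set \<Rightarrow> 'u set \<Rightarrow> ((nat \<Rightarrow> 'u) set \<Rightarrow> real) \<Rightarrow> bool" where
  "keisler M X B \<mu> \<longleftrightarrow> (\<forall>D\<in>LL M X B. 0 \<le> \<mu> D) \<and> \<mu> (X \<rightarrow>\<^sub>E univ M) = 1
     \<and> (\<forall>D\<in>LL M X B. \<forall>E\<in>LL M X B. D \<inter> E = {} \<longrightarrow> \<mu> (D \<union> E) = \<mu> D + \<mu> E)"

text \<open>Equality of measures as measures on L_X(B) (values outside L_X(B) are irrelevant);
  in particular meq M X C \<omega> \<lambda> expresses \<omega>|_C = \<lambda>.\<close>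
definition meq :: "('f, 'r, 'u, 'z) struc_scheme \<Rightarrow> nat set \<Rightarrow> 'u set \<Rightarrow> ((nat \<Rightarrow> 'u) set \<Rightarrow> real) \<Rightarrow> ((nat \<Rightarrow> 'u) set \<Rightarrow> real) \<Rightarrow> bool" where
  "meq M X B \<mu> \<nu> \<longleftrightarrow> (\<forall>D\<in>LL M X B. \<mu> D = \<nu> D)"

definition marg :: "('f, 'r, 'u, 'z) struc_scheme \<Rightarrow> nat set \<Rightarrow> nat set \<Rightarrow> ((nat \<Rightarrow> 'u) set \<Rightarrow> real) \<Rightarrow> ((nat \<Rightarrow> 'u) set \<Rightarrow> real)" where
  "marg M Z X \<omega> = (\<lambda>D. \<omega> (liftto M Z X D))"

definition dirac :: "(nat \<Rightarrow> 'u) set set \<Rightarrow> ((nat \<Rightarrow> 'u) set \<Rightarrow> real)" where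
  "dirac p = (\<lambda>D. if D \<in> p then 1 else 0)"

text \<open>p \<ge>_{D,A} q: some r \<in> S_xy(A) with p|_A \<subseteq> r and p \<union> r \<turnstile> q. Since p, r are closed under
  finite conjunction, p \<union> r \<turnstile> \<psi> means (by compactness, in the monster) that some \<phi> \<in> p and
  \<theta> \<in> r satisfy \<phi> \<and> \<theta> \<rightarrow> \<psi>.\<close>
definition dom_D :: "('f, 'r, 'u, 'z) struc_scheme \<Rightarrow> nat set \<Rightarrow> nat set \<Rightarrow> 'u set
     \<Rightarrow> (nat \<Rightarrow> 'u) set set \<Rightarrow> (nat \<Rightarrow> 'u) set set \<Rightarrow> bool" where
  "dom_D M X Y A p q \<longleftrightarrow> (\<exists>r. complete_type M (X \<union> Y) A r
     \<and> (\<forall>D \<in> p \<inter> LL M X A. liftto M (X \<union> Y) X D \<in> r)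
     \<and> (\<forall>\<psi>\<in>q. \<exists>\<phi>\<in>p. \<exists>\<theta>\<in>r. liftto M (X \<union> Y) X \<phi> \<inter> \<theta> \<subseteq> liftto M (X \<union> Y) Y \<psi>))"

definition dom_E :: "('f, 'r, 'u, 'z) struc_scheme \<Rightarrow> nat set \<Rightarrow> nat set \<Rightarrow> 'u set
     \<Rightarrow> ((nat \<Rightarrow> 'u) set \<Rightarrow> real) \<Rightarrow> ((nat \<Rightarrow> 'u) set \<Rightarrow> real) \<Rightarrow> bool" where
  "dom_E M X Y A \<mu> \<nu> \<longleftrightarrow> (\<exists>lam. keisler M (X \<union> Y) A lam
     \<and> meq M X A (marg M (X \<union> Y) X lam) \<mu>
     \<and> (\<forall>\<omega>. keisler M (X \<union> Y) (univ M) \<omega> \<and> meq M (X \<union> Y) A \<omega> lam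
              \<and> meq M X (univ M) (marg M (X \<union> Y) X \<omega>) \<mu>
           \<longrightarrow> meq M Y (univ M) (marg M (X \<union> Y) Y \<omega>) \<nu>))"

end

theory Submission
  imports Defs
begin

lemma evalt_coinc: "(\<forall>n\<in>fvt t. e n = e' n) \<Longrightarrow> evalt M e t = evalt M e' t"
  by (induction t) (auto cong: map_cong)

lemma sat_coinc: "(\<forall>n\<in>fv \<phi>. e n = e' n) \<Longrightarrow> sat M e \<phi> = sat M e' \<phi>"
proof (induction \<phi> arbitrary: e e')
  case (Eq s t) then show ?case using evalt_coinc[of s e e' M] evalt_coinc[of t e e' M] by auto
next
  case (Rel R ts)
  have "map (evalt M e) ts = map (evalt M e') ts"
    using Rel by (auto intro!: map_cong evalt_coinc)
  then show ?case by (metis sat.simps(2))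
next
  case (Ex n \<phi>)
  have "\<And>b. sat M (e(n:=b)) \<phi> = sat M (e'(n:=b)) \<phi>"
    by (rule Ex.IH) (use Ex.prems in auto)
  then show ?case by simp
next
  case (Neg a)
  then show ?case by simp
next
  case (Conj a b)
  have "sat M e a = sat M e' a" by (rule Conj.IH(1)) (use Conj.prems in auto)
  moreover have "sat M e b = sat M e' b" by (rule Conj.IH(2)) (use Conj.prems in auto)
  ultimately show ?case by simp
qed

lemma dset_sub: "dset M Z \<phi> \<subseteq> Z \<rightarrow>\<^sub>E univ M" unfolding dset_def by auto

lemma LL_sub: "D \<in> LL M Z B \<Longrightarrow> D \<subseteq> Z \<rightarrow>\<^sub>E univ M"
  unfolding LL_def using dset_sub by blast

lemma LL_full:
  fixes M :: "('f, 'r, 'u, 'z) struc_scheme"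
  shows "(Z \<rightarrow>\<^sub>E univ M) \<in> LL M Z B"
proof -
  let ?t = "Fn undefined [] :: ('f,'u) trm"
  have "dset M Z (Eq ?t ?t :: ('f,'r,'u) fm) = Z \<rightarrow>\<^sub>E univ M" unfolding dset_def by auto
  moreover have "fv (Eq ?t ?t :: ('f,'r,'u) fm) \<subseteq> Z" "params (Eq ?t ?t :: ('f,'r,'u) fm) \<subseteq> B" by auto
  ultimately show ?thesis unfolding LL_def by (metis (mono_tags, lifting) mem_Collect_eq)
qed

lemma LL_compl: "D \<in> LL M Z B \<Longrightarrow> (Z \<rightarrow>\<^sub>E univ M) - D \<in> LL M Z B"
proof -
  assume "D \<in> LL M Z B"
  then obtain \<phi> where D: "D = dset M Z \<phi>" "fv \<phi> \<subseteq> Z" "params \<phi> \<subseteq> B" unfolding LL_def by auto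
  have "dset M Z (Neg \<phi>) = (Z \<rightarrow>\<^sub>E univ M) - D" unfolding D dset_def by auto
  moreover have "fv (Neg \<phi>) \<subseteq> Z" "params (Neg \<phi>) \<subseteq> B" using D by auto
  ultimately show ?thesis unfolding LL_def by (metis (mono_tags, lifting) mem_Collect_eq)
qed

lemma LL_inter: "D \<in> LL M Z B \<Longrightarrow> E \<in> LL M Z B \<Longrightarrow> D \<inter> E \<in> LL M Z B"
proof -
  assume "D \<in> LL M Z B" "E \<in> LL M Z B"
  then obtain \<phi> \<psi> where D: "D = dset M Z \<phi>" "fv \<phi> \<subseteq> Z" "params \<phi> \<subseteq> B"
    and E: "E = dset M Z \<psi>" "fv \<psi> \<subseteq> Z" "params \<psi> \<subseteq> B" unfolding LL_def by auto
  have "dset M Z (Conj \<phi> \<psi>) = D \<inter> E" unfolding D E dset_def by auto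
  moreover have "fv (Conj \<phi> \<psi>) \<subseteq> Z" "params (Conj \<phi> \<psi>) \<subseteq> B" using D E by auto
  ultimately show ?thesis unfolding LL_def by (metis (mono_tags, lifting) mem_Collect_eq)
qed

lemma LL_union: "D \<in> LL M Z B \<Longrightarrow> E \<in> LL M Z B \<Longrightarrow> D \<union> E \<in> LL M Z B"
proof -
  assume a: "D \<in> LL M Z B" "E \<in> LL M Z B"
  let ?F = "Z \<rightarrow>\<^sub>E univ M"
  have "D \<union> E = ?F - ((?F - D) \<inter> (?F - E))" using LL_sub[OF a(1)] LL_sub[OF a(2)] by auto
  then show ?thesis using a LL_compl LL_inter by metis
qed

lemma LL_mono: "B \<subseteq> B' \<Longrightarrow> LL M Z B \<subseteq> LL M Z B'"
  unfolding LL_def by blast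

lemma LL_lift: "X \<subseteq> Z \<Longrightarrow> D \<in> LL M X B \<Longrightarrow> liftto M Z X D \<in> LL M Z B"
proof -
  assume XZ: "X \<subseteq> Z" and "D \<in> LL M X B"
  then obtain \<phi> where D: "D = dset M X \<phi>" "fv \<phi> \<subseteq> X" "params \<phi> \<subseteq> B" unfolding LL_def by auto
  have "liftto M Z X D = dset M Z \<phi>"
  proof -
    have "\<And>a. sat M (restrict a X) \<phi> = sat M a \<phi>"
      by (rule sat_coinc) (use D(2) in auto)
    moreover have "\<And>a. a \<in> Z \<rightarrow>\<^sub>E univ M \<Longrightarrow> restrict a X \<in> X \<rightarrow>\<^sub>E univ M" using XZ by auto
    ultimately show ?thesis unfolding liftto_def D dset_def by auto
  qed
  moreover have "fv \<phi> \<subseteq> Z" using D XZ by auto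
  ultimately show ?thesis using D unfolding LL_def by blast
qed

lemma lift_compl: "X \<subseteq> Z \<Longrightarrow> liftto M Z X ((X \<rightarrow>\<^sub>E univ M) - D) = (Z \<rightarrow>\<^sub>E univ M) - liftto M Z X D"
  unfolding liftto_def by auto

lemma lift_inter: "liftto M Z X (D \<inter> E) = liftto M Z X D \<inter> liftto M Z X E"
  unfolding liftto_def by auto

lemma lift_mono: "D \<subseteq> E \<Longrightarrow> liftto M Z X D \<subseteq> liftto M Z X E"
  unfolding liftto_def by auto

lemma k_compl: "keisler M Z B w \<Longrightarrow> D \<in> LL M Z B \<Longrightarrow> w ((Z \<rightarrow>\<^sub>E univ M) - D) = 1 - w D"
proof -
  assume k: "keisler M Z B w" and D: "D \<in> LL M Z B"
  have "D \<union> ((Z \<rightarrow>\<^sub>E univ M) - D) = Z \<rightarrow>\<^sub>E univ M" using LL_sub[OF D] by auto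
  moreover have "D \<inter> ((Z \<rightarrow>\<^sub>E univ M) - D) = {}" by auto
  moreover have "\<forall>D\<in>LL M Z B. \<forall>E\<in>LL M Z B. D \<inter> E = {} \<longrightarrow> w (D \<union> E) = w D + w E"
    "w (Z \<rightarrow>\<^sub>E univ M) = 1" using k unfolding keisler_def by blast+
  ultimately have "1 = w D + w ((Z \<rightarrow>\<^sub>E univ M) - D)" using LL_compl[OF D] D by metis
  then show ?thesis by linarith
qed

lemma k_le1: "keisler M Z B w \<Longrightarrow> D \<in> LL M Z B \<Longrightarrow> w D \<le> 1"
proof -
  assume k: "keisler M Z B w" and D: "D \<in> LL M Z B"
  have "w ((Z \<rightarrow>\<^sub>E univ M) - D) \<ge> 0" using k LL_compl[OF D] unfolding keisler_def by blast
  then show ?thesis using k_compl[OF k D] by linarith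
qed

lemma k_mono: "keisler M Z B w \<Longrightarrow> D \<in> LL M Z B \<Longrightarrow> E \<in> LL M Z B \<Longrightarrow> D \<subseteq> E \<Longrightarrow> w D \<le> w E"
proof -
  assume k: "keisler M Z B w" and D: "D \<in> LL M Z B" and E: "E \<in> LL M Z B" and s: "D \<subseteq> E"
  have ED: "E \<inter> ((Z \<rightarrow>\<^sub>E univ M) - D) \<in> LL M Z B" using LL_inter LL_compl D E by blast
  have "E = D \<union> (E \<inter> ((Z \<rightarrow>\<^sub>E univ M) - D))" using s LL_sub[OF E] by auto
  moreover have "D \<inter> (E \<inter> ((Z \<rightarrow>\<^sub>E univ M) - D)) = {}" by auto
  moreover have "\<forall>D\<in>LL M Z B. \<forall>E\<in>LL M Z B. D \<inter> E = {} \<longrightarrow> w (D \<union> E) = w D + w E"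
    using k unfolding keisler_def by blast
  ultimately have "w E = w D + w (E \<inter> ((Z \<rightarrow>\<^sub>E univ M) - D))"
    using D ED by metis
  moreover have "w (E \<inter> ((Z \<rightarrow>\<^sub>E univ M) - D)) \<ge> 0" using k ED unfolding keisler_def by blast
  ultimately show ?thesis by linarith
qed

lemma k_int1: "keisler M Z B w \<Longrightarrow> S \<in> LL M Z B \<Longrightarrow> T \<in> LL M Z B \<Longrightarrow> w S = 1 \<Longrightarrow> w T = 1
   \<Longrightarrow> w (S \<inter> T) = 1"
proof -
  assume k: "keisler M Z B w" and S: "S \<in> LL M Z B" and T: "T \<in> LL M Z B" and 1: "w S = 1" "w T = 1"
  let ?C = "(Z \<rightarrow>\<^sub>E univ M) - T"
  have C: "?C \<in> LL M Z B" using LL_compl T by blast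
  have SC: "S \<inter> ?C \<in> LL M Z B" using LL_inter S C by blast
  have ST: "S \<inter> T \<in> LL M Z B" using LL_inter S T by blast
  have "S = (S \<inter> T) \<union> (S \<inter> ?C)" using LL_sub[OF S] by auto
  moreover have "(S \<inter> T) \<inter> (S \<inter> ?C) = {}" by auto
  moreover have "\<forall>D\<in>LL M Z B. \<forall>E\<in>LL M Z B. D \<inter> E = {} \<longrightarrow> w (D \<union> E) = w D + w E"
    using k unfolding keisler_def by blast
  ultimately have "w S = w (S \<inter> T) + w (S \<inter> ?C)" using SC ST by metis
  moreover have "w (S \<inter> ?C) \<le> w ?C" using k_mono[OF k SC C] by auto
  moreover have "w ?C = 0" using k_compl[OF k T] 1 by simp
  moreover have "w (S \<inter> ?C) \<ge> 0" using k SC unfolding keisler_def by blast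
  ultimately show ?thesis using 1 by linarith
qed

lemma ct_compl: "complete_type M Z B p \<Longrightarrow> D \<in> LL M Z B \<Longrightarrow> D \<notin> p \<longleftrightarrow> (Z \<rightarrow>\<^sub>E univ M) - D \<in> p"
proof -
  assume c: "complete_type M Z B p" and D: "D \<in> LL M Z B"
  have "D \<in> p \<Longrightarrow> (Z \<rightarrow>\<^sub>E univ M) - D \<in> p \<Longrightarrow> False"
  proof -
    assume "D \<in> p" "(Z \<rightarrow>\<^sub>E univ M) - D \<in> p"
    then have "D \<inter> ((Z \<rightarrow>\<^sub>E univ M) - D) \<in> p" using c unfolding complete_type_def by blast
    then show False using c unfolding complete_type_def by auto
  qed
  then show ?thesis using c D unfolding complete_type_def by blast
qed

lemma dirac_keisler: "complete_type M Z B r \<Longrightarrow> keisler M Z B (dirac r)"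
proof -
  assume c: "complete_type M Z B r"
  have "\<And>D E. D \<in> LL M Z B \<Longrightarrow> E \<in> LL M Z B \<Longrightarrow> D \<inter> E = {} \<Longrightarrow>
      dirac r (D \<union> E) = dirac r D + dirac r E"
  proof -
    fix D E assume D: "D \<in> LL M Z B" and E: "E \<in> LL M Z B" and de: "D \<inter> E = {}"
    have U: "D \<union> E \<in> LL M Z B" using LL_union D E by blast
    have "\<not> (D \<in> r \<and> E \<in> r)" using c de unfolding complete_type_def by metis
    moreover have "D \<in> r \<Longrightarrow> D \<union> E \<in> r" using c U unfolding complete_type_def by blast
    moreover have "E \<in> r \<Longrightarrow> D \<union> E \<in> r" using c U unfolding complete_type_def by blast
    moreover have "D \<notin> r \<Longrightarrow> E \<notin> r \<Longrightarrow> D \<union> E \<notin> r"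
    proof -
      assume "D \<notin> r" "E \<notin> r"
      then have "(Z \<rightarrow>\<^sub>E univ M) - D \<in> r" "(Z \<rightarrow>\<^sub>E univ M) - E \<in> r" using ct_compl c D E by blast+
      then have "((Z \<rightarrow>\<^sub>E univ M) - D) \<inter> ((Z \<rightarrow>\<^sub>E univ M) - E) \<in> r" using c unfolding complete_type_def by blast
      moreover have "((Z \<rightarrow>\<^sub>E univ M) - D) \<inter> ((Z \<rightarrow>\<^sub>E univ M) - E) = (Z \<rightarrow>\<^sub>E univ M) - (D \<union> E)" by auto
      ultimately show ?thesis using ct_compl[OF c U] by auto
    qed
    ultimately show "dirac r (D \<union> E) = dirac r D + dirac r E" unfolding dirac_def by auto
  qed
  then show ?thesis using c unfolding keisler_def dirac_def complete_type_def by auto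
qed

theorem proposition3p6:
  fixes M :: "('f, 'r, 'u) struc" and K :: "'k set"
    and X Y :: "nat set" and A :: "'u set" and p q :: "(nat \<Rightarrow> 'u) set set"
  assumes "monster M K"
    and "A \<subseteq> univ M" and "small K A"
    and "finite X" and "finite Y" and "X \<inter> Y = {}"
    and "complete_type M X (univ M) p" and "complete_type M Y (univ M) q"
    and "dom_D M X Y A p q"
  shows "dom_E M X Y A (dirac p) (dirac q)"
proof -
  let ?Z = "X \<union> Y"
  let ?U = "univ M"
  note cp = assms(7) and cq = assms(8)
  obtain r where cr: "complete_type M ?Z A r"
    and rp: "\<forall>D \<in> p \<inter> LL M X A. liftto M ?Z X D \<in> r"
    and rq: "\<forall>\<psi>\<in>q. \<exists>\<phi>\<in>p. \<exists>\<theta>\<in>r. liftto M ?Z X \<phi> \<inter> \<theta> \<subseteq> liftto M ?Z Y \<psi>"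
    using assms(9) unfolding dom_D_def by blast
  have XZ: "X \<subseteq> ?Z" and YZ: "Y \<subseteq> ?Z" by auto
  have LA: "LL M X A \<subseteq> LL M X ?U" using LL_mono assms(2) by blast
  have m1: "meq M X A (marg M ?Z X (dirac r)) (dirac p)"
    unfolding meq_def marg_def
  proof
    fix D assume D: "D \<in> LL M X A"
    show "dirac r (liftto M ?Z X D) = dirac p D"
    proof (cases "D \<in> p")
      case True then show ?thesis using rp D unfolding dirac_def by auto
    next
      case False
      then have "(X \<rightarrow>\<^sub>E ?U) - D \<in> p" using ct_compl[OF cp] D LA by blast
      moreover have "(X \<rightarrow>\<^sub>E ?U) - D \<in> LL M X A" using LL_compl D by blast
      ultimately have "liftto M ?Z X ((X \<rightarrow>\<^sub>E ?U) - D) \<in> r" using rp by blast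
      then have "(?Z \<rightarrow>\<^sub>E ?U) - liftto M ?Z X D \<in> r" using lift_compl[OF XZ, of M D] by simp
      moreover have "liftto M ?Z X D \<in> LL M ?Z A" using LL_lift[OF XZ D] .
      ultimately have "liftto M ?Z X D \<notin> r" using ct_compl[OF cr] by blast
      then show ?thesis using False unfolding dirac_def by auto
    qed
  qed
  have m2: "meq M Y ?U (marg M ?Z Y w) (dirac q)"
    if kw: "keisler M ?Z ?U w" and wr: "meq M ?Z A w (dirac r)"
      and wp: "meq M X ?U (marg M ?Z X w) (dirac p)" for w
    unfolding meq_def marg_def
  proof
    fix \<psi> assume psi: "\<psi> \<in> LL M Y ?U"
    have Lpsi: "liftto M ?Z Y \<psi> \<in> LL M ?Z ?U" using LL_lift[OF YZ psi] .
    have one: "w (liftto M ?Z Y \<psi>) = 1" if "\<psi> \<in> q" and psi: "\<psi> \<in> LL M Y ?U" for \<psi>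
    proof -
      have Lpsi: "liftto M ?Z Y \<psi> \<in> LL M ?Z ?U" using LL_lift[OF YZ psi] .
      obtain \<phi> \<theta> where ph: "\<phi> \<in> p" and th: "\<theta> \<in> r"
        and sub: "liftto M ?Z X \<phi> \<inter> \<theta> \<subseteq> liftto M ?Z Y \<psi>" using rq \<open>\<psi> \<in> q\<close> by blast
      have phL: "\<phi> \<in> LL M X ?U" using cp ph unfolding complete_type_def by blast
      have thA: "\<theta> \<in> LL M ?Z A" using cr th unfolding complete_type_def by blast
      have thL: "\<theta> \<in> LL M ?Z ?U" using thA LL_mono[OF assms(2)] by blast
      have Lph: "liftto M ?Z X \<phi> \<in> LL M ?Z ?U" using LL_lift[OF XZ phL] .
      have w1: "w (liftto M ?Z X \<phi>) = 1" using wp phL ph unfolding meq_def marg_def dirac_def by auto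
      have w2: "w \<theta> = 1" using wr thA th unfolding meq_def dirac_def by auto
      have "w (liftto M ?Z X \<phi> \<inter> \<theta>) = 1" using k_int1[OF kw Lph thL w1 w2] .
      moreover have "w (liftto M ?Z X \<phi> \<inter> \<theta>) \<le> w (liftto M ?Z Y \<psi>)"
        using k_mono[OF kw LL_inter[OF Lph thL] Lpsi sub] .
      moreover have "w (liftto M ?Z Y \<psi>) \<le> 1" using k_le1[OF kw Lpsi] .
      ultimately show ?thesis by linarith
    qed
    show "w (liftto M ?Z Y \<psi>) = dirac q \<psi>"
    proof (cases "\<psi> \<in> q")
      case True then show ?thesis using one psi unfolding dirac_def by auto
    next
      case False
      then have c: "(Y \<rightarrow>\<^sub>E ?U) - \<psi> \<in> q" using ct_compl[OF cq psi] by blast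
      have "w (liftto M ?Z Y ((Y \<rightarrow>\<^sub>E ?U) - \<psi>)) = 1" using one[OF c LL_compl[OF psi]] .
      then have "w ((?Z \<rightarrow>\<^sub>E ?U) - liftto M ?Z Y \<psi>) = 1" using lift_compl[OF YZ] by metis
      then have "w (liftto M ?Z Y \<psi>) = 0" using k_compl[OF kw Lpsi] by simp
      then show ?thesis using False unfolding dirac_def by auto
    qed
  qed
  show ?thesis unfolding dom_E_def
    using dirac_keisler[OF cr] m1 m2 by blast
qed

end
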